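(* Let $V$ be a Whittaker module of type $\eta$ over $R$. Then $\mathrm{End}_R(V)\cong Z(R)/Z_V$ (via the action of the center on $V$). In particular $\mathrm{End}_R(V)$ is commutative.
   Context: Let $f\in\mathbb{C}[H]$ be a polynomial. $R=R(f)$ is the associative $\mathbb{C}$-algebra generated by $E,F,H$ with relations $EF-FE=f(H)$, $HE-EH=E$, $HF-FH=-F$. Let $R(E)=\mathbb{C}[E]$; $Z(R)$ is the center of $R$. Fix an algebra homomorphism $\eta:R(E)\to\mathbb{C}$ with $\eta(E)\neq0$. A vector $v$ of an $R$-module $V$ is a Whittaker vector (of type $\eta$) if $Ev=\eta(E)v$; $V$ is a Whittaker module of type $\eta$ if $V=Rv$ for some Whittaker vector $v$. $Z_V=\mathrm{Ann}_R(V)\cap Z(R)$. *)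

theory Defs
  imports "HOL-Computational_Algebra.Polynomial"
begin

datatype gen = GE | GF | GH

text \<open>The free associative C-algebra on E, F, H: finitely supported functions
  from words (lists of generators) to complex coefficients.\<close>
type_synonym fa = "gen list \<Rightarrow> complex"

definition FA :: "fa set" where
  "FA = {p. finite {w. p w \<noteq> 0}}"

definition fa_add :: "fa \<Rightarrow> fa \<Rightarrow> fa" where
  "fa_add p q = (\<lambda>w. p w + q w)"

definition fa_neg :: "fa \<Rightarrow> fa" where
  "fa_neg p = (\<lambda>w. - p w)"

definition fa_sub :: "fa \<Rightarrow> fa \<Rightarrow> fa" where
  "fa_sub p q = (\<lambda>w. p w - q w)"

definition fa_mult :: "fa \<Rightarrow> fa \<Rightarrow> fa" where
  "fa_mult p q = (\<lambda>w. \<Sum>i\<le>length w. p (take i w) * q (drop i w))"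

definition fa_const :: "complex \<Rightarrow> fa" where
  "fa_const c = (\<lambda>w. if w = [] then c else 0)"

definition fa_word :: "gen list \<Rightarrow> fa" where
  "fa_word u = (\<lambda>w. if w = u then 1 else 0)"

abbreviation "fa_E \<equiv> fa_word [GE]"
abbreviation "fa_F \<equiv> fa_word [GF]"
abbreviation "fa_H \<equiv> fa_word [GH]"

definition fa_polyH :: "complex poly \<Rightarrow> fa" where
  "fa_polyH f = (\<lambda>w. if set w \<subseteq> {GH} then coeff f (length w) else 0)"

definition R_rels :: "complex poly \<Rightarrow> fa set" where
  "R_rels f = {
     fa_sub (fa_sub (fa_mult fa_E fa_F) (fa_mult fa_F fa_E)) (fa_polyH f),
     fa_sub (fa_sub (fa_mult fa_H fa_E) (fa_mult fa_E fa_H)) fa_E,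
     fa_add (fa_sub (fa_mult fa_H fa_F) (fa_mult fa_F fa_H)) fa_F }"

text \<open>The two-sided ideal of the free algebra generated by the relations;
  R(f) is the quotient FA / R_ideal f.\<close>
inductive_set R_ideal :: "complex poly \<Rightarrow> fa set" for f where
  zero: "(\<lambda>_. 0) \<in> R_ideal f"
| add: "x \<in> R_ideal f \<Longrightarrow> y \<in> R_ideal f \<Longrightarrow> fa_add x y \<in> R_ideal f"
| gen: "r \<in> R_rels f \<Longrightarrow> a \<in> FA \<Longrightarrow> b \<in> FA \<Longrightarrow> fa_mult (fa_mult a r) b \<in> R_ideal f"

text \<open>Representatives of central elements of R(f): z with zb - bz in the ideal
  for all b.\<close>
definition R_center :: "complex poly \<Rightarrow> fa set" where
  "R_center f = {z \<in> FA. \<forall>b\<in>FA. fa_sub (fa_mult z b) (fa_mult b z) \<in> R_ideal f}"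

text \<open>An R(f)-module: an abelian group V with an action of the free algebra
  (which makes V a complex vector space via the scalars) annihilated by the ideal
  of relations; this is exactly a module over R(f).\<close>
definition R_module :: "complex poly \<Rightarrow> (fa \<Rightarrow> 'v::ab_group_add \<Rightarrow> 'v) \<Rightarrow> bool" where
  "R_module f act \<longleftrightarrow>
     (\<forall>p\<in>FA. \<forall>x y. act p (x + y) = act p x + act p y) \<and>
     (\<forall>p\<in>FA. \<forall>q\<in>FA. \<forall>x. act (fa_add p q) x = act p x + act q x) \<and>
     (\<forall>p\<in>FA. \<forall>q\<in>FA. \<forall>x. act (fa_mult p q) x = act p (act q x)) \<and>
     (\<forall>x. act (fa_const 1) x = x) \<and>
     (\<forall>r\<in>R_ideal f. \<forall>x. act r x = 0)"

definition whittaker_vector :: "(fa \<Rightarrow> 'v \<Rightarrow> 'v) \<Rightarrow> complex \<Rightarrow> 'v \<Rightarrow> bool" where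
  "whittaker_vector act eta v \<longleftrightarrow> act fa_E v = act (fa_const eta) v"

text \<open>Whittaker module of type eta (eta = eta(E), assumed nonzero): V = R v.\<close>
definition whittaker_module :: "complex poly \<Rightarrow> (fa \<Rightarrow> 'v::ab_group_add \<Rightarrow> 'v) \<Rightarrow> complex \<Rightarrow> bool" where
  "whittaker_module f act eta \<longleftrightarrow> R_module f act \<and>
     (\<exists>v. whittaker_vector act eta v \<and> (\<forall>x. \<exists>p\<in>FA. x = act p v))"

text \<open>End_R(V): additive maps commuting with the action (hence C-linear).\<close>
definition R_End :: "(fa \<Rightarrow> 'v::ab_group_add \<Rightarrow> 'v) \<Rightarrow> ('v \<Rightarrow> 'v) set" where
  "R_End act = {\<phi>. (\<forall>x y. \<phi> (x + y) = \<phi> x + \<phi> y) \<and>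
                   (\<forall>p\<in>FA. \<forall>x. \<phi> (act p x) = act p (\<phi> x))}"

definition Z_ann :: "complex poly \<Rightarrow> (fa \<Rightarrow> 'v::ab_group_add \<Rightarrow> 'v) \<Rightarrow> fa set" where
  "Z_ann f act = {z \<in> R_center f. \<forall>x. act z x = 0}"

end

theory Submission
  imports Defs
begin

lemma fa_mult_assoc: "fa_mult (fa_mult p q) r = fa_mult p (fa_mult q r)"
proof
  fix w :: "gen list"
  define n where "n = length w"
  define g where "g j k = p (take j w) * q (take k (drop j w)) * r (drop (j+k) w)" for j k
  have L: "fa_mult (fa_mult p q) r w = (\<Sum>i\<le>n. \<Sum>j\<le>i. g j (i - j))"
    unfolding fa_mult_def n_def g_def
    by (auto simp: sum_distrib_right min_def take_drop intro!: sum.cong)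
  have R: "fa_mult p (fa_mult q r) w = (\<Sum>j\<le>n. \<Sum>k\<le>n-j. g j k)"
    unfolding fa_mult_def n_def g_def
    by (auto simp: sum_distrib_left mult.assoc add.commute intro!: sum.cong)
  have "(\<Sum>i\<le>n. \<Sum>j\<le>i. g j (i - j)) = (\<Sum>(j,k)\<in>{(j,k). j+k \<le> n}. g j k)"
    by (rule sum.triangle_reindex_eq[symmetric])
  also have "{(j,k). j+k \<le> n} = Sigma {..n} (\<lambda>j. {..n-j})" by auto
  also have "(\<Sum>(j,k)\<in>Sigma {..n} (\<lambda>j. {..n-j}). g j k) = (\<Sum>j\<le>n. \<Sum>k\<le>n-j. g j k)"
    by (rule sum.Sigma[symmetric]) auto
  finally show "fa_mult (fa_mult p q) r w = fa_mult p (fa_mult q r) w" using L R by simp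
qed

typedef nc = "UNIV :: fa set" by simp
setup_lifting type_definition_nc

instantiation nc :: ring_1
begin
lift_definition zero_nc :: nc is "\<lambda>_. 0" .
lift_definition one_nc :: nc is "fa_const 1" .
lift_definition plus_nc :: "nc \<Rightarrow> nc \<Rightarrow> nc" is fa_add .
lift_definition minus_nc :: "nc \<Rightarrow> nc \<Rightarrow> nc" is fa_sub .
lift_definition uminus_nc :: "nc \<Rightarrow> nc" is fa_neg .
lift_definition times_nc :: "nc \<Rightarrow> nc \<Rightarrow> nc" is fa_mult .

lemma fa_mult_one_left: "fa_mult (fa_const 1) q = q"
proof
  fix w :: "gen list"
  have "fa_mult (fa_const 1) q w = (\<Sum>i\<le>length w. if i = 0 then q w else 0)"
    unfolding fa_mult_def fa_const_def
    by (rule sum.cong) (auto simp: Suc_le_eq)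
  then show "fa_mult (fa_const 1) q w = q w" by simp
qed

lemma fa_mult_one_right: "fa_mult p (fa_const 1) = p"
proof
  fix w :: "gen list"
  have "fa_mult p (fa_const 1) w = (\<Sum>i\<le>length w. if i = length w then p w else 0)"
    unfolding fa_mult_def fa_const_def
    by (rule sum.cong) auto
  then show "fa_mult p (fa_const 1) w = p w" by simp
qed

instance
proof
  fix a b c :: nc
  show "a * b * c = a * (b * c)" by transfer (rule fa_mult_assoc)
  show "a + b + c = a + (b + c)" by transfer (auto simp: fa_add_def)
  show "a + b = b + a" by transfer (auto simp: fa_add_def)
  show "0 + a = a" by transfer (auto simp: fa_add_def)
  show "- a + a = 0" by transfer (auto simp: fa_add_def fa_neg_def)
  show "a - b = a + - b" by transfer (auto simp: fa_add_def fa_neg_def fa_sub_def)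
  show "(a + b) * c = a * c + b * c" by transfer (auto simp: fa_add_def fa_mult_def sum.distrib algebra_simps)
  show "a * (b + c) = a * b + a * c" by transfer (auto simp: fa_add_def fa_mult_def sum.distrib algebra_simps)
  show "1 * a = a" by transfer (rule fa_mult_one_left)
  show "a * 1 = a" by transfer (rule fa_mult_one_right)
  show "(0::nc) \<noteq> 1" by transfer (auto simp: fa_const_def fun_eq_iff)
qed
end

lift_definition fin :: "nc \<Rightarrow> bool" is "\<lambda>p. p \<in> FA" .
lift_definition cst :: "complex \<Rightarrow> nc" is fa_const .
lift_definition wd :: "gen list \<Rightarrow> nc" is fa_word .

lemma Rep_sum: "finite S \<Longrightarrow> Rep_nc (sum g S) w = (\<Sum>i\<in>S. Rep_nc (g i) w)"
  by (induction S rule: finite_induct) (auto simp: zero_nc.rep_eq plus_nc.rep_eq fa_add_def)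

lemma fa_mult_const_left: "fa_mult (fa_const c) q = (\<lambda>w. c * q w)"
proof
  fix w :: "gen list"
  have "fa_mult (fa_const c) q w = (\<Sum>i\<le>length w. if i = 0 then c * q w else 0)"
    unfolding fa_mult_def fa_const_def
    by (rule sum.cong) (auto simp: Suc_le_eq)
  then show "fa_mult (fa_const c) q w = c * q w" by simp
qed

lemma fa_mult_const_right: "fa_mult p (fa_const c) = (\<lambda>w. c * p w)"
proof
  fix w :: "gen list"
  have "fa_mult p (fa_const c) w = (\<Sum>i\<le>length w. if i = length w then c * p w else 0)"
    unfolding fa_mult_def fa_const_def
    by (rule sum.cong) auto
  then show "fa_mult p (fa_const c) w = c * p w" by simp
qed

lemma cst_comm: "cst c * x = x * cst c"
  by transfer (simp add: fa_mult_const_left fa_mult_const_right)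

lemma Rep_cst_mult: "Rep_nc (cst c * x) w = c * Rep_nc x w"
  by transfer (simp add: fa_mult_const_left)

lemma cst_add: "cst (a + b) = cst a + cst b"
  by transfer (auto simp: fa_const_def fa_add_def)
lemma cst_mult: "cst (a * b) = cst a * cst b"
  apply transfer apply (subst fa_mult_const_left) apply (auto simp: fa_const_def) done
lemma cst_1[simp]: "cst 1 = 1"
  by transfer simp
lemma cst_0[simp]: "cst 0 = 0"
  by transfer (auto simp: fa_const_def)
lemma cst_uminus: "cst (- a) = - cst a"
  by transfer (auto simp: fa_const_def fa_neg_def)

lemma fa_mult_word_left:
  "fa_mult (fa_word u) P w = (if take (length u) w = u then P (drop (length u) w) else 0)"
proof -
  have "fa_mult (fa_word u) P w = (\<Sum>i\<le>length w. if i = length u \<and> take (length u) w = u then P (drop (length u) w) else 0)"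
    unfolding fa_mult_def fa_word_def
    by (rule sum.cong) auto
  also have "\<dots> = (if take (length u) w = u then P (drop (length u) w) else 0)"
  proof (cases "take (length u) w = u")
    case True
    have "length (take (length u) w) = length u" using True by simp
    then have "length u \<le> length w" by (simp add: min_def split: if_splits)
    then show ?thesis using True by simp
  qed simp
  finally show ?thesis .
qed

lemma wd_append: "wd (u @ v) = wd u * wd v"
  apply transfer apply (rule ext) apply (subst fa_mult_word_left)
  apply (auto simp: fa_word_def append_eq_conv_conj)
  by (metis append_take_drop_id)

lemma wd_Nil: "wd [] = 1"
  by transfer (simp add: fa_word_def fa_const_def)

lemma wd_Cons: "wd (g # u) = wd [g] * wd u"
  using wd_append[of "[g]" u] by simp

lemma fin_0[simp]: "fin 0" by transfer (simp add: FA_def)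
lemma fin_1[simp]: "fin 1" by transfer (simp add: FA_def fa_const_def)
lemma fin_cst[simp]: "fin (cst c)"
  by transfer (simp add: FA_def fa_const_def)
lemma fin_wd[simp]: "fin (wd u)"
  by transfer (simp add: FA_def fa_word_def)
lemma fin_add[simp]: "fin x \<Longrightarrow> fin y \<Longrightarrow> fin (x + y)"
proof transfer
  fix x y :: fa assume "x \<in> FA" "y \<in> FA"
  moreover have "{w. fa_add x y w \<noteq> 0} \<subseteq> {w. x w \<noteq> 0} \<union> {w. y w \<noteq> 0}" by (auto simp: fa_add_def)
  ultimately show "fa_add x y \<in> FA" unfolding FA_def by (auto intro: finite_subset)
qed
lemma fin_uminus[simp]: "fin x \<Longrightarrow> fin (- x)"
  by transfer (auto simp: FA_def fa_neg_def)
lemma fin_diff[simp]: "fin x \<Longrightarrow> fin y \<Longrightarrow> fin (x - y)"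
  by (simp only: diff_conv_add_uminus fin_add fin_uminus)

lemma fin_mult[simp]: "fin x \<Longrightarrow> fin y \<Longrightarrow> fin (x * y)"
proof transfer
  fix p q :: fa
  assume p: "p \<in> FA" and q: "q \<in> FA"
  have "{w. fa_mult p q w \<noteq> 0} \<subseteq> (\<lambda>(u,v). u @ v) ` ({w. p w \<noteq> 0} \<times> {w. q w \<noteq> 0})"
  proof
    fix w assume "w \<in> {w. fa_mult p q w \<noteq> 0}"
    then obtain i where "p (take i w) * q (drop i w) \<noteq> 0"
      unfolding fa_mult_def by (auto elim: sum.not_neutral_contains_not_neutral)
    then show "w \<in> (\<lambda>(u,v). u @ v) ` ({w. p w \<noteq> 0} \<times> {w. q w \<noteq> 0})"
      by (auto intro!: image_eqI[where x="(take i w, drop i w)"])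
  qed
  moreover have "finite ((\<lambda>(u,v). u @ v) ` ({w. p w \<noteq> 0} \<times> {w. q w \<noteq> 0}))"
    using p q by (auto simp: FA_def)
  ultimately show "fa_mult p q \<in> FA" unfolding FA_def by (auto intro: finite_subset)
qed

lemma fin_power[simp]: "fin x \<Longrightarrow> fin (x ^ n)"
  by (induction n) auto

lemma fin_sum[simp]: "(\<And>i. i \<in> S \<Longrightarrow> fin (g i)) \<Longrightarrow> fin (sum g S)"
  by (induction S rule: infinite_finite_induct) auto

lemma decomp:
  assumes "fin p"
  shows "p = (\<Sum>w\<in>{w. Rep_nc p w \<noteq> 0}. cst (Rep_nc p w) * wd w)"
proof -
  have fs: "finite {w. Rep_nc p w \<noteq> 0}" using assms by transfer (simp add: FA_def)
  show ?thesis
  proof (rule Rep_nc_inject[THEN iffD1], rule ext)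
    fix x
    have "Rep_nc (\<Sum>w\<in>{w. Rep_nc p w \<noteq> 0}. cst (Rep_nc p w) * wd w) x
        = (\<Sum>w\<in>{w. Rep_nc p w \<noteq> 0}. Rep_nc p w * (if x = w then 1 else 0))"
      using fs by (simp add: Rep_sum Rep_cst_mult wd.rep_eq fa_word_def)
    also have "\<dots> = (\<Sum>w\<in>{w. Rep_nc p w \<noteq> 0}. if x = w then Rep_nc p w else 0)"
      by (rule sum.cong) auto
    also have "\<dots> = Rep_nc p x" using fs by (simp add: sum.delta)
    finally show "Rep_nc p x = Rep_nc (\<Sum>w\<in>{w. Rep_nc p w \<noteq> 0}. cst (Rep_nc p w) * wd w) x" by simp
  qed
qed

lemma fin_induct[consumes 1, case_names add zero cw]:
  assumes "fin p"
    and add: "\<And>x y. P x \<Longrightarrow> P y \<Longrightarrow> P (x + y)"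
    and zero: "P 0"
    and cw: "\<And>c w. P (cst c * wd w)"
  shows "P p"
proof -
  have "\<And>S. finite S \<Longrightarrow> P (\<Sum>w\<in>S. cst (Rep_nc p w) * wd w)"
  proof -
    fix S :: "gen list set" assume "finite S"
    then show "P (\<Sum>w\<in>S. cst (Rep_nc p w) * wd w)"
      by (induction S rule: finite_induct) (auto intro: add zero cw)
  qed
  moreover have "finite {w. Rep_nc p w \<noteq> 0}" using assms by transfer (simp add: FA_def)
  ultimately show ?thesis using decomp[OF assms(1)] by metis
qed

lift_definition inJ :: "complex poly \<Rightarrow> nc \<Rightarrow> bool" is "\<lambda>f p. p \<in> R_ideal f" .
lift_definition PH :: "complex poly \<Rightarrow> nc" is fa_polyH .

abbreviation "gE \<equiv> wd [GE]"
abbreviation "gF \<equiv> wd [GF]"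
abbreviation "gH \<equiv> wd [GH]"

lemma FA_mult: "a \<in> FA \<Longrightarrow> b \<in> FA \<Longrightarrow> fa_mult a b \<in> FA"
  using fin_mult[of "Abs_nc a" "Abs_nc b"] by (simp add: fin.rep_eq times_nc.rep_eq Abs_nc_inverse)

lemma inJ_0[simp]: "inJ f 0"
  by transfer (rule R_ideal.zero)

lemma inJ_add[simp]: "inJ f x \<Longrightarrow> inJ f y \<Longrightarrow> inJ f (x + y)"
  by transfer (rule R_ideal.add)

lemma R_ideal_mult_left: "x \<in> R_ideal f \<Longrightarrow> a \<in> FA \<Longrightarrow> fa_mult a x \<in> R_ideal f"
proof (induction x rule: R_ideal.induct)
  case zero
  have "fa_mult a (\<lambda>_. 0) = (\<lambda>_. 0)" by (simp add: fa_mult_def)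
  then show ?case by (simp add: R_ideal.zero)
next
  case (add x y)
  have "fa_mult a (fa_add x y) = fa_add (fa_mult a x) (fa_mult a y)"
    by (auto simp: fa_mult_def fa_add_def sum.distrib algebra_simps)
  then show ?case using add by (simp add: R_ideal.add)
next
  case (gen r a' b)
  have "fa_mult a (fa_mult (fa_mult a' r) b) = fa_mult (fa_mult (fa_mult a a') r) b"
    by (simp add: fa_mult_assoc)
  then show ?case using gen by (simp add: R_ideal.gen FA_mult)
qed

lemma R_ideal_mult_right: "x \<in> R_ideal f \<Longrightarrow> a \<in> FA \<Longrightarrow> fa_mult x a \<in> R_ideal f"
proof (induction x rule: R_ideal.induct)
  case zero
  have "fa_mult (\<lambda>_. 0) a = (\<lambda>_. 0)" by (simp add: fa_mult_def)
  then show ?case by (simp add: R_ideal.zero)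
next
  case (add x y)
  have "fa_mult (fa_add x y) a = fa_add (fa_mult x a) (fa_mult y a)"
    by (auto simp: fa_mult_def fa_add_def sum.distrib algebra_simps)
  then show ?case using add by (simp add: R_ideal.add)
next
  case (gen r a' b)
  have "fa_mult (fa_mult (fa_mult a' r) b) a = fa_mult (fa_mult a' r) (fa_mult b a)"
    by (simp add: fa_mult_assoc)
  then show ?case using gen by (simp add: R_ideal.gen FA_mult)
qed

lemma inJ_mult_left[simp]: "fin a \<Longrightarrow> inJ f x \<Longrightarrow> inJ f (a * x)"
  by transfer (rule R_ideal_mult_left)

lemma inJ_mult_right[simp]: "fin a \<Longrightarrow> inJ f x \<Longrightarrow> inJ f (x * a)"
  by transfer (rule R_ideal_mult_right)

lemma inJ_uminus[simp]: "inJ f x \<Longrightarrow> inJ f (- x)"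
proof -
  assume "inJ f x"
  then have "inJ f (cst (-1) * x)" by simp
  then show ?thesis by (simp add: cst_uminus)
qed

lemma inJ_diff[simp]: "inJ f x \<Longrightarrow> inJ f y \<Longrightarrow> inJ f (x - y)"
  by (simp only: diff_conv_add_uminus inJ_add inJ_uminus)

lemma inJ_sum: "(\<And>i. i \<in> S \<Longrightarrow> inJ f (g i)) \<Longrightarrow> inJ f (sum g S)"
  by (induction S rule: infinite_finite_induct) auto

lemma inJ_rel: "r \<in> R_rels f \<Longrightarrow> inJ f (Abs_nc r)"
proof -
  assume "r \<in> R_rels f"
  then have "fa_mult (fa_mult (fa_const 1) r) (fa_const 1) \<in> R_ideal f"
    by (rule R_ideal.gen) (auto simp: FA_def fa_const_def)
  then show ?thesis by (simp add: inJ.rep_eq Abs_nc_inverse fa_mult_one_left fa_mult_one_right)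
qed

lemma rel1: "inJ f (gE * gF - gF * gE - PH f)"
proof -
  have "Rep_nc (gE * gF - gF * gE - PH f) = fa_sub (fa_sub (fa_mult fa_E fa_F) (fa_mult fa_F fa_E)) (fa_polyH f)"
    by (simp add: PH.rep_eq minus_nc.rep_eq times_nc.rep_eq wd.rep_eq)
  then show ?thesis using inJ_rel[of "fa_sub (fa_sub (fa_mult fa_E fa_F) (fa_mult fa_F fa_E)) (fa_polyH f)" f]
    by (simp add: R_rels_def) (metis (no_types) Rep_nc_inverse)
qed

lemma rel2: "inJ f (gH * gE - gE * gH - gE)"
proof -
  have "Rep_nc (gH * gE - gE * gH - gE) = fa_sub (fa_sub (fa_mult fa_H fa_E) (fa_mult fa_E fa_H)) fa_E"
    by (simp add: minus_nc.rep_eq times_nc.rep_eq wd.rep_eq)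
  then show ?thesis using inJ_rel[of "fa_sub (fa_sub (fa_mult fa_H fa_E) (fa_mult fa_E fa_H)) fa_E" f]
    by (simp add: R_rels_def) (metis (no_types) Rep_nc_inverse)
qed

lemma rel3: "inJ f (gH * gF - gF * gH + gF)"
proof -
  have "Rep_nc (gH * gF - gF * gH + gF) = fa_add (fa_sub (fa_mult fa_H fa_F) (fa_mult fa_F fa_H)) fa_F"
    by (simp add: plus_nc.rep_eq minus_nc.rep_eq times_nc.rep_eq wd.rep_eq)
  then show ?thesis using inJ_rel[of "fa_add (fa_sub (fa_mult fa_H fa_F) (fa_mult fa_F fa_H)) fa_F" f]
    by (simp add: R_rels_def) (metis (no_types) Rep_nc_inverse)
qed

definition pev :: "complex poly \<Rightarrow> nc \<Rightarrow> nc" where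
  "pev p x = fold_coeffs (\<lambda>a r. cst a + x * r) p 0"

lemma pev_0[simp]: "pev 0 x = 0"
  by (simp add: pev_def)

lemma pev_pCons: "pev (pCons a p) x = cst a + x * pev p x"
  by (cases "p = 0 \<and> a = 0") (auto simp add: pev_def)

lemma pev_const[simp]: "pev [:c:] x = cst c"
  by (simp add: pev_pCons)

lemma pev_add: "pev (p + q) x = pev p x + pev q x"
proof (induction p arbitrary: q)
  case 0 then show ?case by simp
next
  case (pCons a p)
  then show ?case by (cases q) (simp add: pev_pCons cst_add algebra_simps)
qed

lemma cst_comm_assoc: "x * (cst c * y) = cst c * (x * y)"
  by (metis mult.assoc cst_comm)

lemma pev_smult: "pev (smult c p) x = cst c * pev p x"
  by (induction p) (simp_all add: pev_pCons cst_mult distrib_left cst_comm_assoc)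

lemma pev_uminus: "pev (- p) x = - pev p x"
  using pev_smult[of "-1" p x] by (simp add: cst_uminus)

lemma pev_diff: "pev (p - q) x = pev p x - pev q x"
  using pev_add[of p "-q" x] by (simp add: pev_uminus)

lemma pev_comm: "x * pev p x = pev p x * x"
proof (induction p)
  case (pCons a p)
  have "x * pev (pCons a p) x = x * cst a + x * (x * pev p x)" by (simp add: pev_pCons distrib_left)
  also have "\<dots> = cst a * x + x * (pev p x * x)" using pCons by (simp add: cst_comm)
  also have "\<dots> = pev (pCons a p) x * x" by (simp add: pev_pCons distrib_right mult.assoc)
  finally show ?case .
qed simp

lemma pev_mult: "pev (p * q) x = pev p x * pev q x"
  by (induction p) (simp_all add: pev_pCons pev_add pev_smult distrib_right mult.assoc)

lemma pev_X[simp]: "pev [:0, 1:] x = x"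
  by (simp add: pev_pCons)

lemma pev_1[simp]: "pev 1 x = 1"
  by (simp add: one_pCons pev_pCons)

lemma pev_pcompose: "pev (pcompose p q) x = pev p (pev q x)"
  by (induction p) (simp_all add: pcompose_pCons pev_pCons pev_add pev_mult)

lemma fin_pev[simp]: "fin x \<Longrightarrow> fin (pev p x)"
  apply (induction p) apply (auto simp: pev_pCons) done

lemma fa_mult_H: "fa_mult fa_H P w = (case w of [] \<Rightarrow> 0 | g # w' \<Rightarrow> if g = GH then P w' else 0)"
  by (simp add: fa_mult_word_left split: list.split)

lemma PH_pev: "PH p = pev p gH"
proof (induction p)
  case 0
  show ?case by (rule Rep_nc_inject[THEN iffD1]) (auto simp: PH.rep_eq zero_nc.rep_eq fa_polyH_def)
next
  case (pCons a p)
  have "Rep_nc (PH (pCons a p)) w = Rep_nc (cst a + gH * PH p) w" for w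
    by (cases w) (auto simp: PH.rep_eq plus_nc.rep_eq times_nc.rep_eq cst.rep_eq wd.rep_eq
        fa_add_def fa_mult_H fa_const_def fa_polyH_def coeff_pCons)
  then have "PH (pCons a p) = cst a + gH * PH p" by (metis Rep_nc_inverse ext)
  then show ?case using pCons by (simp add: pev_pCons)
qed

definition cg :: "complex poly \<Rightarrow> nc \<Rightarrow> nc \<Rightarrow> bool" where
  "cg f x y \<longleftrightarrow> inJ f (x - y)"

lemma cg_refl[simp]: "cg f x x" by (simp add: cg_def)
lemma cg_sym: "cg f x y \<Longrightarrow> cg f y x"
proof -
  have "y - x = - (x - y)" by simp
  then show "cg f x y \<Longrightarrow> cg f y x" unfolding cg_def by (simp only:) (rule inJ_uminus)
qed
lemma cg_trans[trans]: "cg f x y \<Longrightarrow> cg f y z \<Longrightarrow> cg f x z"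
proof -
  have "x - z = (x - y) + (y - z)" by simp
  then show "cg f x y \<Longrightarrow> cg f y z \<Longrightarrow> cg f x z" unfolding cg_def by (simp only:) (rule inJ_add)
qed
lemma cg_add: "cg f a b \<Longrightarrow> cg f c d \<Longrightarrow> cg f (a + c) (b + d)"
proof -
  have "(a + c) - (b + d) = (a - b) + (c - d)" by simp
  then show "cg f a b \<Longrightarrow> cg f c d \<Longrightarrow> cg f (a + c) (b + d)" unfolding cg_def by (simp only:) (rule inJ_add)
qed
lemma cg_diff: "cg f a b \<Longrightarrow> cg f c d \<Longrightarrow> cg f (a - c) (b - d)"
proof -
  have "(a - c) - (b - d) = (a - b) - (c - d)" by simp
  then show "cg f a b \<Longrightarrow> cg f c d \<Longrightarrow> cg f (a - c) (b - d)" unfolding cg_def by (simp only:) (rule inJ_diff)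
qed
lemma cg_ml: "fin a \<Longrightarrow> cg f x y \<Longrightarrow> cg f (a * x) (a * y)"
  unfolding cg_def by (simp only: right_diff_distrib[symmetric]) (rule inJ_mult_left)
lemma cg_mr: "fin a \<Longrightarrow> cg f x y \<Longrightarrow> cg f (x * a) (y * a)"
  unfolding cg_def by (simp only: left_diff_distrib[symmetric]) (rule inJ_mult_right)

lemma cg_EH: "cg f (gE * gH) ((gH - 1) * gE)"
proof -
  have eq: "gE * gH - (gH - 1) * gE = - (gH * gE - gE * gH - gE)" by (simp add: algebra_simps)
  show ?thesis by (simp only: cg_def eq) (rule inJ_uminus[OF rel2])
qed

lemma cg_HF: "cg f (gH * gF) (gF * (gH - 1))"
proof -
  have eq: "gH * gF - gF * (gH - 1) = gH * gF - gF * gH + gF" by (simp add: algebra_simps)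
  show ?thesis by (simp only: cg_def eq) (rule rel3)
qed

lemma cg_EF: "cg f (gE * gF) (gF * gE + pev f gH)"
proof -
  have eq: "gE * gF - (gF * gE + pev f gH) = gE * gF - gF * gE - PH f" by (simp add: algebra_simps PH_pev)
  show ?thesis by (simp only: cg_def eq) (rule rel1)
qed

lemma cg_E_pev: "cg f (gE * pev p gH) (pev p (gH - 1) * gE)"
proof (induction p)
  case 0 then show ?case by simp
next
  case (pCons a p)
  have "gE * pev (pCons a p) gH = cst a * gE + (gE * gH) * pev p gH"
    by (simp add: pev_pCons distrib_left cst_comm mult.assoc)
  also have "cg f \<dots> (cst a * gE + ((gH - 1) * gE) * pev p gH)"
    by (rule cg_add[OF cg_refl cg_mr[OF _ cg_EH]]) simp
  also have "cst a * gE + ((gH - 1) * gE) * pev p gH = cst a * gE + (gH - 1) * (gE * pev p gH)"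
    by (simp add: mult.assoc)
  also have "cg f \<dots> (cst a * gE + (gH - 1) * (pev p (gH - 1) * gE))"
    by (rule cg_add[OF cg_refl cg_ml[OF _ pCons.IH]]) simp
  also have "cst a * gE + (gH - 1) * (pev p (gH - 1) * gE) = pev (pCons a p) (gH - 1) * gE"
    by (simp add: pev_pCons distrib_right mult.assoc)
  finally show ?case .
qed

lemma cg_pev_F: "cg f (pev p gH * gF) (gF * pev p (gH - 1))"
proof (induction p)
  case 0 then show ?case by simp
next
  case (pCons a p)
  have "pev (pCons a p) gH * gF = cst a * gF + gH * (pev p gH * gF)"
    by (simp add: pev_pCons distrib_right mult.assoc)
  also have "cg f \<dots> (cst a * gF + gH * (gF * pev p (gH - 1)))"
    by (rule cg_add[OF cg_refl cg_ml[OF _ pCons.IH]]) simp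
  also have "cst a * gF + gH * (gF * pev p (gH - 1)) = cst a * gF + (gH * gF) * pev p (gH - 1)"
    by (simp add: mult.assoc)
  also have "cg f \<dots> (cst a * gF + (gF * (gH - 1)) * pev p (gH - 1))"
    by (rule cg_add[OF cg_refl cg_mr[OF _ cg_HF]]) simp
  also have "cst a * gF + (gF * (gH - 1)) * pev p (gH - 1) = gF * pev (pCons a p) (gH - 1)"
    by (simp add: pev_pCons distrib_left mult.assoc cst_comm)
  finally show ?case .
qed

lemma pev_lin: "pev [:-1, 1:] x = x - 1"
proof -
  have "pev [:-1, 1:] x = cst (-1) + x * cst 1" by (simp only: pev_pCons pev_0) simp
  then show ?thesis by (simp add: cst_uminus)
qed

lemma pev_shift: "pev p (gH - 1) = pev (pcompose p [:-1, 1:]) gH"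
  by (simp only: pev_pcompose pev_lin)

abbreviation sh :: "'a::comm_ring_1 poly \<Rightarrow> 'a poly" where
  "sh p \<equiv> pcompose p [:-1, 1:]"

lemma sh_pCons': "pCons a q - sh (pCons a q) = pCons 0 (q - sh q) + sh q"
proof -
  have "sh (pCons a q) = [:a:] + [:-1, 1:] * sh q" by (rule pcompose_pCons)
  also have "[:-1, 1:] * sh q = pCons 0 (sh q) - sh q" by simp
  finally have "sh (pCons a q) = [:a:] + pCons 0 (sh q) - sh q" by simp
  moreover have "pCons a q = [:a:] + pCons 0 q" by simp
  moreover have "pCons 0 (q - sh q) = pCons 0 q - pCons 0 (sh q)" by simp
  moreover have "(x + y) - (x + z - w) = (y - z) + w" for x y z w :: "'a poly"
    by (simp add: algebra_simps)
  ultimately show ?thesis by metis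
qed

lemma sh_degree: "degree (sh (p :: 'a::idom poly)) = degree p"
  by (simp add: degree_pcompose)

lemma sh_lead: "lead_coeff (sh (p :: 'a::idom poly)) = lead_coeff p"
  by (simp add: lead_coeff_comp)

lemma shift_diff:
  fixes p :: "'a::idom poly"
  assumes "degree p = Suc n"
  shows "degree (p - sh p) \<le> n \<and> coeff (p - sh p) n = of_nat (Suc n) * lead_coeff p"
  using assms
proof (induction n arbitrary: p)
  case 0
  obtain a q where p: "p = pCons a q" by (cases p)
  have dq: "degree q = 0" and q0: "q \<noteq> 0" using 0 p by (auto split: if_splits)
  then obtain c where qc: "q = [:c:]" by (metis degree_eq_zeroE)
  have "p - sh p = q" using qc p sh_pCons'[of a q] by simp
  then show ?case using p q0 dq by simp
next
  case (Suc m)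
  obtain a q where p: "p = pCons a q" by (cases p)
  have dq: "degree q = Suc m" and q0: "q \<noteq> 0" using Suc.prems p by (auto split: if_splits)
  have IH: "degree (q - sh q) \<le> m" "coeff (q - sh q) m = of_nat (Suc m) * lead_coeff q"
    using Suc.IH[OF dq] by auto
  have D: "p - sh p = pCons 0 (q - sh q) + sh q" using p sh_pCons' by simp
  have "degree (pCons 0 (q - sh q)) \<le> Suc m" using IH(1)
    by (metis Suc_le_mono degree_pCons_le le_trans)
  moreover have "degree (sh q) \<le> Suc m" using dq sh_degree[of q] by simp
  ultimately have "degree (p - sh p) \<le> Suc m" unfolding D by (rule degree_add_le)
  moreover have "coeff (p - sh p) (Suc m) = of_nat (Suc (Suc m)) * lead_coeff p"
  proof -
    have c1: "coeff (sh q) (Suc m) = lead_coeff q" using sh_lead[of q] sh_degree[of q] dq by simp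
    have c2: "lead_coeff p = lead_coeff q" using p q0 by simp
    have "coeff (p - sh p) (Suc m) = coeff (q - sh q) m + coeff (sh q) (Suc m)" unfolding D by simp
    also have "\<dots> = of_nat (Suc m) * lead_coeff q + lead_coeff q" using IH(2) c1 by simp
    also have "\<dots> = of_nat (Suc (Suc m)) * lead_coeff p" using c2
      by (simp only: of_nat_Suc[of "Suc m"] distrib_right mult_1) (simp add: add.commute)
    finally show ?thesis .
  qed
  ultimately show ?case by simp
qed

lemma antidiff: "\<exists>u. u - sh u = (f :: complex poly)"
proof -
  have "\<forall>f :: complex poly. degree f \<le> d \<longrightarrow> (\<exists>u. u - sh u = f)" for d
  proof (induction d)
    case 0
    show ?case
    proof (intro allI impI)
      fix f :: "complex poly" assume "degree f \<le> 0"
      then obtain c where fc: "f = [:c:]" by (metis degree_eq_zeroE le_zero_eq)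
      show "\<exists>u. u - sh u = f"
      proof (cases "c = 0")
        case True then show ?thesis using fc by (intro exI[of _ 0]) simp
      next
        case False
        have dm: "degree (monom c 1) = Suc 0" using False by (simp add: degree_monom_eq)
        have lc: "lead_coeff (monom c 1) = c" using dm by simp
        from shift_diff[OF dm] have h1: "degree (monom c 1 - sh (monom c 1)) = 0"
          and h2: "coeff (monom c 1 - sh (monom c 1)) 0 = c" by (simp_all only: lc) auto
        then have "monom c 1 - sh (monom c 1) = f" using fc by (metis degree_0_id)
        then show ?thesis by blast
      qed
    qed
  next
    case (Suc d)
    show ?case
    proof (intro allI impI)
      fix f :: "complex poly" assume df: "degree f \<le> Suc d"
      define c where "c = coeff f (Suc d)"
      define u1 where "u1 = monom (c / of_nat (Suc (Suc d))) (Suc (Suc d))"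
      define D where "D = u1 - sh u1"
      have cD: "coeff D (Suc d) = c" and dD: "degree D \<le> Suc d"
      proof -
        have "coeff D (Suc d) = c \<and> degree D \<le> Suc d"
        proof (cases "c = 0")
          case True then show ?thesis by (simp add: D_def u1_def)
        next
          case False
          have nz: "(of_nat (Suc (Suc d)) :: complex) \<noteq> 0" by (simp only: of_nat_eq_0_iff)
          have cz: "c / of_nat (Suc (Suc d)) \<noteq> 0" using False nz by (simp only: divide_eq_0_iff de_Morgan_disj) simp
          have du: "degree u1 = Suc (Suc d)" by (simp only: u1_def degree_monom_eq[OF cz])
          have lu: "lead_coeff u1 = c / of_nat (Suc (Suc d))" using du by (simp add: u1_def)
          have sd: "degree D \<le> Suc d \<and> coeff D (Suc d) = of_nat (Suc (Suc d)) * lead_coeff u1"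
            unfolding D_def by (rule shift_diff[OF du])
          have "of_nat (Suc (Suc d)) * lead_coeff u1 = c" unfolding lu using nz by simp
          with sd show ?thesis by simp
        qed
        then show "coeff D (Suc d) = c" "degree D \<le> Suc d" by auto
      qed
      have "degree (f - D) \<le> d"
      proof (rule degree_le, intro allI impI)
        fix i assume "d < i"
        show "coeff (f - D) i = 0"
        proof (cases "i = Suc d")
          case True then show ?thesis using cD c_def by simp
        next
          case False
          with \<open>d < i\<close> have "Suc d < i" by simp
          then have "coeff f i = 0" "coeff D i = 0" using df dD
            by (auto intro!: coeff_eq_0)
          then show ?thesis by simp
        qed
      qed
      with Suc.IH obtain u2 where "u2 - sh u2 = f - D" by blast
      have "(u1 + u2) - sh (u1 + u2) = (u1 - sh u1) + (u2 - sh u2)"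
        by (simp only: pcompose_add) (simp add: algebra_simps)
      then have "(u1 + u2) - sh (u1 + u2) = f" using \<open>u2 - sh u2 = f - D\<close> D_def by simp
      then show "\<exists>u. u - sh u = f" by blast
    qed
  qed
  then show ?thesis by blast
qed

definition uf :: "complex poly \<Rightarrow> complex poly" where
  "uf f = (SOME u. u - sh u = f)"

lemma uf: "uf f - sh (uf f) = f"
  unfolding uf_def by (rule someI_ex) (rule antidiff)

lemma uf': "pev f gH + pev (uf f) (gH - 1) = pev (uf f) gH"
proof -
  have "f + sh (uf f) = uf f" using uf[of f] by (simp add: algebra_simps)
  then have "pev (f + sh (uf f)) gH = pev (uf f) gH" by simp
  then show ?thesis by (simp only: pev_add pev_shift)
qed

definition Om :: "complex poly \<Rightarrow> nc" where
  "Om f = gF * gE + pev (uf f) gH"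

lemma fin_Om[simp]: "fin (Om f)" by (simp add: Om_def)

lemma cg_EOm: "cg f (gE * Om f) (Om f * gE)"
proof -
  let ?U = "pev (uf f) gH"
  have "gE * Om f = (gE * gF) * gE + gE * ?U" by (simp add: Om_def distrib_left mult.assoc)
  also have "cg f \<dots> ((gF * gE + pev f gH) * gE + pev (uf f) (gH - 1) * gE)"
    by (rule cg_add[OF cg_mr[OF _ cg_EF] cg_E_pev]) simp
  also have "(gF * gE + pev f gH) * gE + pev (uf f) (gH - 1) * gE
      = gF * gE * gE + (pev f gH + pev (uf f) (gH - 1)) * gE"
    by (simp add: distrib_right add.assoc)
  also have "\<dots> = Om f * gE" by (simp only: uf') (simp add: Om_def distrib_right)
  finally show ?thesis .
qed

lemma cg_OmF: "cg f (Om f * gF) (gF * Om f)"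
proof -
  let ?U = "pev (uf f) gH"
  have "Om f * gF = gF * (gE * gF) + ?U * gF" by (simp add: Om_def distrib_right mult.assoc)
  also have "cg f \<dots> (gF * (gF * gE + pev f gH) + gF * pev (uf f) (gH - 1))"
    by (rule cg_add[OF cg_ml[OF _ cg_EF] cg_pev_F]) simp
  also have "gF * (gF * gE + pev f gH) + gF * pev (uf f) (gH - 1)
      = gF * (gF * gE) + gF * (pev f gH + pev (uf f) (gH - 1))"
    by (simp add: distrib_left add.assoc)
  also have "\<dots> = gF * Om f" by (simp only: uf') (simp add: Om_def distrib_left mult.assoc)
  finally show ?thesis .
qed

lemma cg_OmH: "cg f (Om f * gH) (gH * Om f)"
proof -
  let ?U = "pev (uf f) gH"
  let ?X = "gF * ((gH - 1) * gE) + ?U * gH"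
  have "Om f * gH = gF * (gE * gH) + ?U * gH" by (simp add: Om_def distrib_right mult.assoc)
  also have "cg f \<dots> ?X"
    by (rule cg_add[OF cg_ml[OF _ cg_EH] cg_refl]) simp
  finally have 1: "cg f (Om f * gH) ?X" .
  have "gH * Om f = (gH * gF) * gE + gH * ?U" by (simp add: Om_def distrib_left mult.assoc)
  also have "cg f \<dots> ((gF * (gH - 1)) * gE + gH * ?U)"
    by (rule cg_add[OF cg_mr[OF _ cg_HF] cg_refl]) simp
  also have "(gF * (gH - 1)) * gE + gH * ?U = ?X" by (simp add: mult.assoc pev_comm)
  finally have 2: "cg f (gH * Om f) ?X" .
  show ?thesis using 1 2 by (metis cg_sym cg_trans)
qed

definition central :: "complex poly \<Rightarrow> nc \<Rightarrow> bool" where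
  "central f z \<longleftrightarrow> fin z \<and> (\<forall>b. fin b \<longrightarrow> cg f (z * b) (b * z))"

lemma central_gen:
  assumes z: "fin z"
    and e: "cg f (z * gE) (gE * z)" and ff: "cg f (z * gF) (gF * z)" and h: "cg f (z * gH) (gH * z)"
  shows "central f z"
proof -
  have g: "cg f (z * wd [g]) (wd [g] * z)" for g by (cases g) (use e ff h in auto)
  have w: "cg f (z * wd w) (wd w * z)" for w
  proof (induction w)
    case Nil then show ?case by (simp only: wd_Nil mult_1_right mult_1_left cg_refl)
  next
    case (Cons g w)
    have "z * wd (g # w) = (z * wd [g]) * wd w" by (subst wd_Cons) (simp only: mult.assoc)
    also have "cg f \<dots> ((wd [g] * z) * wd w)" by (rule cg_mr[OF _ g]) simp
    also have "(wd [g] * z) * wd w = wd [g] * (z * wd w)" by (simp add: mult.assoc)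
    also have "cg f \<dots> (wd [g] * (wd w * z))" by (rule cg_ml[OF _ Cons]) simp
    also have "wd [g] * (wd w * z) = wd (g # w) * z" by (subst (2) wd_Cons) (simp only: mult.assoc)
    finally show ?case .
  qed
  have "cg f (z * b) (b * z)" if "fin b" for b
    using that
  proof (induction b rule: fin_induct)
    case (add x y)
    then show ?case by (simp add: distrib_left distrib_right cg_add)
  next
    case zero show ?case by simp
  next
    case (cw c w)
    have "z * (cst c * wd w) = cst c * (z * wd w)" by (rule cst_comm_assoc)
    also have "cg f \<dots> (cst c * (wd w * z))" by (rule cg_ml[OF _ w]) simp
    also have "cst c * (wd w * z) = cst c * wd w * z" by (simp add: mult.assoc)
    finally show ?case .
  qed
  then show ?thesis using z by (simp add: central_def)
qed

lemma central_Om: "central f (Om f)"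
  by (rule central_gen) (simp_all add: cg_EOm[THEN cg_sym] cg_OmF cg_OmH)

lemma central_add: "central f a \<Longrightarrow> central f b \<Longrightarrow> central f (a + b)"
  unfolding central_def by (auto simp: distrib_left distrib_right intro: cg_add)

lemma central_mult: assumes "central f a" "central f b" shows "central f (a * b)"
proof -
  have "cg f (a * b * c) (c * (a * b))" if "fin c" for c
  proof -
    have "a * b * c = a * (b * c)" by (simp add: mult.assoc)
    also have "cg f \<dots> (a * (c * b))" using assms that by (intro cg_ml) (auto simp: central_def)
    also have "a * (c * b) = (a * c) * b" by (simp add: mult.assoc)
    also have "cg f \<dots> ((c * a) * b)" using assms that by (intro cg_mr) (auto simp: central_def)
    also have "(c * a) * b = c * (a * b)" by (simp add: mult.assoc)
    finally show ?thesis .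
  qed
  then show ?thesis using assms by (simp add: central_def)
qed

lemma central_cst: "central f (cst c)"
  by (simp add: central_def cst_comm)

lemma central_diff: "central f a \<Longrightarrow> central f b \<Longrightarrow> central f (a - b)"
  unfolding central_def by (auto simp: left_diff_distrib right_diff_distrib intro: cg_diff)

lemma central_pev: "central f z \<Longrightarrow> central f (pev q z)"
  by (induction q) (simp_all add: pev_pCons central_add central_mult central_cst central_def[of f 0])

lemma R_center_iff: "Rep_nc z \<in> R_center f \<longleftrightarrow> central f z"
proof
  assume a: "Rep_nc z \<in> R_center f"
  have "cg f (z * b) (b * z)" if "fin b" for b
  proof -
    have "Rep_nc b \<in> FA" using that by (simp add: fin.rep_eq)
    then have "fa_sub (fa_mult (Rep_nc z) (Rep_nc b)) (fa_mult (Rep_nc b) (Rep_nc z)) \<in> R_ideal f"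
      using a by (auto simp: R_center_def)
    then show ?thesis by (simp add: cg_def inJ.rep_eq minus_nc.rep_eq times_nc.rep_eq)
  qed
  moreover have "fin z" using a by (simp add: R_center_def fin.rep_eq)
  ultimately show "central f z" by (simp add: central_def)
next
  assume c: "central f z"
  have "fa_sub (fa_mult (Rep_nc z) b) (fa_mult b (Rep_nc z)) \<in> R_ideal f" if "b \<in> FA" for b
  proof -
    have "fin (Abs_nc b)" using that by (simp add: fin.rep_eq Abs_nc_inverse)
    then have "cg f (z * Abs_nc b) (Abs_nc b * z)" using c by (simp add: central_def)
    then show ?thesis by (simp add: cg_def inJ.rep_eq minus_nc.rep_eq times_nc.rep_eq Abs_nc_inverse)
  qed
  moreover have "Rep_nc z \<in> FA" using c by (simp add: central_def fin.rep_eq)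
  ultimately show "Rep_nc z \<in> R_center f" by (simp add: R_center_def)
qed

definition evG :: "complex poly poly \<Rightarrow> nc \<Rightarrow> nc \<Rightarrow> nc" where
  "evG G w h = fold_coeffs (\<lambda>q r. pev q w + h * r) G 0"

lemma evG_0[simp]: "evG 0 w h = 0" by (simp add: evG_def)

lemma evG_pCons: "evG (pCons q G) w h = pev q w + h * evG G w h"
  by (cases "G = 0 \<and> q = 0") (auto simp add: evG_def)

lemma evG_add: "evG (G + G') w h = evG G w h + evG G' w h"
proof (induction G arbitrary: G')
  case 0 then show ?case by simp
next
  case (pCons a p)
  then show ?case by (cases G') (simp add: evG_pCons pev_add algebra_simps)
qed

lemma fin_evG[simp]: "fin w \<Longrightarrow> fin h \<Longrightarrow> fin (evG G w h)"
  apply (induction G) apply (auto simp: evG_pCons) done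

lemma sh_pCons2: "sh (pCons a q) = [:a:] + pCons 0 (sh q) - sh q"
proof -
  have "sh (pCons a q) = [:a:] + [:-1, 1:] * sh q" by (rule pcompose_pCons)
  also have "[:-1, 1:] * sh q = pCons 0 (sh q) - sh q" by simp
  finally show ?thesis by simp
qed

abbreviation shp :: "'a::comm_ring_1 poly \<Rightarrow> 'a poly" where
  "shp p \<equiv> pcompose p [:1, 1:]"

lemma shp_pCons2: "shp (pCons a q) = [:a:] + pCons 0 (shp q) + shp q"
proof -
  have "shp (pCons a q) = [:a:] + [:1, 1:] * shp q" by (rule pcompose_pCons)
  also have "[:1, 1:] * shp q = pCons 0 (shp q) + shp q" by simp
  finally show ?thesis by simp
qed

lemma cg_FH: "cg f (gF * gH) ((gH + 1) * gF)"
proof -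
  have eq: "gF * gH - (gH + 1) * gF = - (gH * gF - gF * gH + gF)" by (simp add: algebra_simps)
  show ?thesis by (simp only: cg_def eq) (rule inJ_uminus[OF rel3])
qed

locale WM =
  fixes f :: "complex poly" and act :: "fa \<Rightarrow> 'v::ab_group_add \<Rightarrow> 'v"
  assumes Rm: "R_module f act"
begin

definition A :: "nc \<Rightarrow> 'v \<Rightarrow> 'v" where "A x = act (Rep_nc x)"

lemma A_add_vec: "fin p \<Longrightarrow> A p (a + b) = A p a + A p b"
  using Rm by (simp add: R_module_def A_def fin.rep_eq)

lemma A_zero_vec[simp]: "fin p \<Longrightarrow> A p 0 = 0"
  using A_add_vec[of p 0 0] by simp

lemma A_neg_vec: "fin p \<Longrightarrow> A p (- a) = - A p a"
proof -
  assume "fin p"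
  then have "A p a + A p (- a) = 0" using A_add_vec[of p a "- a"] by simp
  then show ?thesis by (rule sym[OF add.inverse_unique])
qed

lemma A_diff_vec: "fin p \<Longrightarrow> A p (a - b) = A p a - A p b"
  using A_add_vec[of p a "- b"] A_neg_vec[of p b] by simp

lemma A_add: "fin p \<Longrightarrow> fin q \<Longrightarrow> A (p + q) a = A p a + A q a"
  using Rm by (simp add: R_module_def A_def fin.rep_eq plus_nc.rep_eq)

lemma A_mult: "fin p \<Longrightarrow> fin q \<Longrightarrow> A (p * q) a = A p (A q a)"
  using Rm by (simp add: R_module_def A_def fin.rep_eq times_nc.rep_eq)

lemma A_one[simp]: "A 1 a = a"
  using Rm by (simp add: R_module_def A_def one_nc.rep_eq)

lemma A_J: "inJ f r \<Longrightarrow> A r a = 0"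
  using Rm by (simp add: R_module_def A_def inJ.rep_eq)

lemma A_0[simp]: "A 0 a = 0"
  by (rule A_J) simp

lemma A_uminus: "fin p \<Longrightarrow> A (- p) a = - A p a"
proof -
  assume "fin p"
  then have "A p a + A (- p) a = 0" using A_add[of p "- p" a] by simp
  then show ?thesis by (rule sym[OF add.inverse_unique])
qed

lemma A_diff: "fin p \<Longrightarrow> fin q \<Longrightarrow> A (p - q) a = A p a - A q a"
  using A_add[of p "- q" a] A_uminus[of q a] by simp

lemma A_cg: "fin p \<Longrightarrow> fin q \<Longrightarrow> cg f p q \<Longrightarrow> A p a = A q a"
  using A_diff[of p q a] A_J[of "p - q" a] by (simp add: cg_def)

lemma A_cst_cancel: "c \<noteq> 0 \<Longrightarrow> A (cst (1 / c)) (A (cst c) a) = a"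
  by (simp flip: A_mult cst_mult)

lemma A_central_comm: "central f z \<Longrightarrow> fin b \<Longrightarrow> A z (A b a) = A b (A z a)"
  by (simp add: central_def flip: A_mult) (metis A_cg fin_mult)

lemma A_cst_comm: "fin b \<Longrightarrow> A (cst c) (A b a) = A b (A (cst c) a)"
  by (rule A_central_comm[OF central_cst])

lemma A_sum_vec: "fin p \<Longrightarrow> A p (sum g S) = (\<Sum>i\<in>S. A p (g i))"
  by (induction S rule: infinite_finite_induct) (auto simp: A_add_vec)

end

locale WV = WM +
  fixes eta :: complex and v :: 'a
  assumes wv: "A gE v = A (cst eta) v" and eta0: "eta \<noteq> 0"
begin

abbreviation "\<Omega> \<equiv> Om f"
abbreviation ev :: "complex poly poly \<Rightarrow> nc" where "ev G \<equiv> evG G \<Omega> gH"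

definition Y :: "complex poly poly \<Rightarrow> 'a" where "Y G = A (ev G) v"

lemma cpev: "central f (pev q \<Omega>)"
  by (rule central_pev[OF central_Om])

lemma Y_0[simp]: "Y 0 = 0" by (simp add: Y_def)

lemma Y_add: "Y (G + G') = Y G + Y G'"
  by (simp add: Y_def evG_add A_add)

lemma Y_uminus: "Y (- G) = - Y G"
  using Y_add[of G "- G"] by (metis add.inverse_unique add.right_inverse Y_0)

lemma Y_diff: "Y (G - G') = Y G - Y G'"
  using Y_add[of G "- G'"] Y_uminus[of G'] by simp

lemma Y_pCons: "Y (pCons q G) = A (pev q \<Omega>) v + A gH (Y G)"
  by (simp add: Y_def evG_pCons A_add A_mult)

lemma Y_const: "Y [:q:] = A (pev q \<Omega>) v"
  using Y_pCons[of q 0] by simp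

lemma Y_H: "A gH (Y G) = Y (pCons 0 G)"
  by (simp add: Y_pCons)

lemma Y_smult: "Y (smult q G) = A (pev q \<Omega>) (Y G)"
proof (induction G)
  case 0 then show ?case by simp
next
  case (pCons a G)
  have "smult q (pCons a G) = pCons (q * a) (smult q G)" by (rule smult_pCons)
  then have "Y (smult q (pCons a G)) = A (pev (q * a) \<Omega>) v + A gH (Y (smult q G))"
    by (simp only: Y_pCons)
  also have "\<dots> = A (pev q \<Omega> * pev a \<Omega>) v + A gH (A (pev q \<Omega>) (Y G))"
    by (simp only: pev_mult pCons.IH)
  also have "\<dots> = A (pev q \<Omega>) (A (pev a \<Omega>) v) + A (pev q \<Omega>) (A gH (Y G))"
    by (simp add: A_mult A_central_comm[OF cpev, where b=gH])
  also have "\<dots> = A (pev q \<Omega>) (Y (pCons a G))"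
    by (simp add: Y_pCons A_add_vec)
  finally show ?case .
qed

lemma Y_mult: "A (ev P) (Y B) = Y (P * B)"
proof (induction P)
  case 0 then show ?case by simp
next
  case (pCons a P)
  have "A (ev (pCons a P)) (Y B) = A (pev a \<Omega>) (Y B) + A gH (A (ev P) (Y B))"
    by (simp add: evG_pCons A_add A_mult)
  also have "\<dots> = Y (smult a B) + Y (pCons 0 (P * B))"
    using pCons by (simp add: Y_smult Y_H)
  also have "\<dots> = Y (pCons a P * B)" by (simp add: Y_add)
  finally show ?case .
qed

lemma Y_E: "A gE (Y G) = A (cst eta) (Y (sh G))"
proof (induction G)
  case 0 then show ?case by simp
next
  case (pCons a G)
  have 1: "A gE (A (pev a \<Omega>) v) = A (cst eta) (Y [:a:])"
  proof -
    have "A gE (A (pev a \<Omega>) v) = A (pev a \<Omega>) (A gE v)"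
      by (simp add: A_central_comm[OF cpev, where b=gE])
    also have "\<dots> = A (cst eta) (A (pev a \<Omega>) v)" by (simp add: wv A_cst_comm)
    finally show ?thesis by (simp add: Y_const)
  qed
  have 2: "A gE (A gH (Y G)) = A (cst eta) (Y (pCons 0 (sh G)) - Y (sh G))"
  proof -
    have "A gE (A gH (Y G)) = A (gE * gH) (Y G)" by (simp add: A_mult)
    also have "\<dots> = A ((gH - 1) * gE) (Y G)" by (rule A_cg[OF _ _ cg_EH]) simp_all
    also have "\<dots> = A gH (A gE (Y G)) - A gE (Y G)" by (simp add: A_mult left_diff_distrib A_diff)
    also have "\<dots> = A gH (A (cst eta) (Y (sh G))) - A (cst eta) (Y (sh G))" using pCons by simp
    also have "A gH (A (cst eta) (Y (sh G))) = A (cst eta) (A gH (Y (sh G)))"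
      by (rule A_cst_comm[symmetric]) simp
    also have "A (cst eta) (A gH (Y (sh G))) - A (cst eta) (Y (sh G)) = A (cst eta) (Y (pCons 0 (sh G)) - Y (sh G))"
      by (simp add: A_diff_vec Y_H)
    finally show ?thesis .
  qed
  have "A gE (Y (pCons a G)) = A (cst eta) (Y [:a:] + (Y (pCons 0 (sh G)) - Y (sh G)))"
    using 1 2 by (simp add: Y_pCons A_add_vec)
  also have "\<dots> = A (cst eta) (Y (sh (pCons a G)))"
    by (simp only: sh_pCons2 Y_add Y_diff add_diff_eq)
  finally show ?case .
qed

lemma Y_mapc: "Y (map_poly (\<lambda>c. [:c:]) p) = A (pev p gH) v"
proof (induction p)
  case 0 then show ?case by simp
next
  case (pCons a p)
  have "map_poly (\<lambda>c. [:c:]) (pCons a p) = pCons [:a:] (map_poly (\<lambda>c. [:c:]) p)"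
    by (simp add: map_poly_pCons)
  then show ?case using pCons by (simp add: Y_pCons pev_pCons A_add A_mult)
qed

definition GF :: "complex poly poly" where
  "GF = smult [:1 / eta:] ([:[:0, 1:]:] - map_poly (\<lambda>c. [:c:]) (uf f))"

lemma Fv: "A gF v = Y GF"
proof -
  have "A \<Omega> v = A gF (A gE v) + A (pev (uf f) gH) v"
    by (simp add: Om_def A_add A_mult)
  also have "\<dots> = A (cst eta) (A gF v) + Y (map_poly (\<lambda>c. [:c:]) (uf f))"
    by (simp add: wv A_cst_comm Y_mapc)
  finally have "A (cst eta) (A gF v) = Y [:[:0, 1:]:] - Y (map_poly (\<lambda>c. [:c:]) (uf f))"
    by (simp add: Y_const algebra_simps)
  then have "A (cst (1 / eta)) (A (cst eta) (A gF v)) = Y GF"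
    by (simp add: GF_def Y_smult Y_diff)
  then show ?thesis using eta0 by (simp add: A_cst_cancel)
qed

lemma Y_F: "A gF (Y G) = Y (shp G * GF)"
proof (induction G)
  case 0 then show ?case by simp
next
  case (pCons a G)
  have 1: "A gF (A (pev a \<Omega>) v) = Y (smult a GF)"
    by (simp add: A_central_comm[OF cpev, where b=gF, symmetric] Fv Y_smult)
  have 2: "A gF (A gH (Y G)) = Y (pCons 0 (shp G * GF)) + Y (shp G * GF)"
  proof -
    have "A gF (A gH (Y G)) = A (gF * gH) (Y G)" by (simp add: A_mult)
    also have "\<dots> = A ((gH + 1) * gF) (Y G)" by (rule A_cg[OF _ _ cg_FH]) simp_all
    also have "\<dots> = A gH (A gF (Y G)) + A gF (Y G)" by (simp add: A_mult distrib_right A_add)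
    finally show ?thesis using pCons by (simp add: Y_H)
  qed
  have pe: "([:a:] + pCons 0 (shp G) + shp G) * GF = smult a GF + pCons 0 (shp G * GF) + shp G * GF"
    by (simp only: distrib_right mult_pCons_left smult_0_left mult_zero_left pCons_0_0 add_0_right add_0_left)
  have "A gF (Y (pCons a G)) = Y (smult a GF) + (Y (pCons 0 (shp G * GF)) + Y (shp G * GF))"
    using 1 2 by (simp add: Y_pCons A_add_vec)
  also have "\<dots> = Y (smult a GF + pCons 0 (shp G * GF) + shp G * GF)"
    by (simp only: Y_add add.assoc)
  also have "\<dots> = Y (shp (pCons a G) * GF)" unfolding shp_pCons2[of a G] pe ..
  finally show ?case .
qed

lemma span_wd: "\<exists>G. A (wd w) v = Y G"
proof (induction w)
  case Nil
  have "A (wd []) v = Y [:1:]" by (simp add: wd_Nil Y_const)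
  then show ?case by blast
next
  case (Cons g w)
  then obtain G where G: "A (wd w) v = Y G" by blast
  have "A (wd (g # w)) v = A (wd [g]) (Y G)"
    using G by (simp add: A_mult wd_Cons[of g w])
  moreover have "\<exists>G'. A (wd [g]) (Y G) = Y G'"
  proof (cases g)
    case GE
    have "A gE (Y G) = Y (smult [:eta:] (sh G))" by (simp only: Y_E Y_smult pev_const)
    then show ?thesis using GE by blast
  next
    case GF then show ?thesis using Y_F by blast
  next
    case GH then show ?thesis using Y_H by blast
  qed
  ultimately show ?case by auto
qed

lemma span: "fin p \<Longrightarrow> \<exists>G. A p v = Y G"
proof -
  assume "fin p"
  then have "fin p \<and> (\<exists>G. A p v = Y G)"
  proof (induction p rule: fin_induct)
    case (add x y)
    then obtain Gx Gy where "A x v = Y Gx" "A y v = Y Gy" "fin x" "fin y" by blast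
    then have "A (x + y) v = Y (Gx + Gy)" by (simp add: A_add Y_add)
    then show ?case using add by auto
  next
    case zero
    have "A 0 v = Y 0" by simp
    then show ?case using fin_0 by blast
  next
    case (cw c w)
    obtain G where "A (wd w) v = Y G" using span_wd by blast
    then have "A (cst c * wd w) v = Y (smult [:c:] G)" by (simp add: A_mult Y_smult)
    then show ?case by auto
  qed
  then show ?thesis by blast
qed

end

context WV
begin

lemma Y_sh0: "Y G = 0 \<Longrightarrow> Y (sh G) = 0"
proof -
  assume "Y G = 0"
  then have "A (cst eta) (Y (sh G)) = 0" using Y_E[of G] by simp
  then have "A (cst (1 / eta)) (A (cst eta) (Y (sh G))) = 0" by simp
  then show ?thesis using eta0 by (simp add: A_cst_cancel)
qed

lemma Y_smult0: "Y G = 0 \<Longrightarrow> Y (smult q G) = 0"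
  by (simp add: Y_smult)

lemma Y_pCons0: "Y G = 0 \<Longrightarrow> Y (pCons 0 G) = 0"
  by (simp flip: Y_H)

lemma Y_monom0: "Y [:a:] = 0 \<Longrightarrow> Y (monom a n) = 0"
  by (induction n) (simp_all add: monom_0 monom_Suc Y_pCons0)

lemma diff_info:
  fixes G :: "complex poly poly"
  assumes "degree G = Suc m"
  shows "degree (G - sh G) = m \<and> lead_coeff (G - sh G) = of_nat (Suc m) * lead_coeff G"
proof -
  have sd: "degree (G - sh G) \<le> m" "coeff (G - sh G) m = of_nat (Suc m) * lead_coeff G"
    using shift_diff[OF assms] by auto
  have "G \<noteq> 0" using assms by auto
  then have "lead_coeff G \<noteq> 0" by simp
  moreover have "(of_nat (Suc m) :: complex poly) \<noteq> 0" by (simp only: of_nat_eq_0_iff)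
  ultimately have "coeff (G - sh G) m \<noteq> 0" using sd(2) by simp
  then have "m \<le> degree (G - sh G)" by (rule le_degree)
  then have "degree (G - sh G) = m" using sd(1) by simp
  then show ?thesis using sd(2) by simp
qed

lemma L1: "degree G = n \<Longrightarrow> Y G = 0 \<Longrightarrow> Y [:lead_coeff G:] = 0"
proof (induction n arbitrary: G)
  case 0
  then have "[:coeff G 0:] = G" by (simp add: degree_0_id)
  then show ?case using 0 by simp
next
  case (Suc m)
  let ?D = "G - sh G"
  have YD: "Y ?D = 0" using Suc.prems Y_sh0[of G] by (simp add: Y_diff)
  have di: "degree ?D = m" "lead_coeff ?D = of_nat (Suc m) * lead_coeff G"
    using diff_info[OF Suc.prems(1)] by auto
  have "Y [:lead_coeff ?D:] = 0" by (rule Suc.IH[OF di(1) YD])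
  then have "Y (smult [:1 / of_nat (Suc m):] [:lead_coeff ?D:]) = 0" by (rule Y_smult0)
  moreover have "smult [:1 / of_nat (Suc m):] [:lead_coeff ?D:] = [:lead_coeff G:]"
  proof -
    have "[:1 / of_nat (Suc m) :: complex:] * (of_nat (Suc m) * lead_coeff G) = lead_coeff G"
      by (simp add: of_nat_poly mult.assoc[symmetric] del: of_nat_Suc)
    then show ?thesis using di(2) by simp
  qed
  ultimately show ?case by simp
qed

lemma L2: "degree G \<le> n \<Longrightarrow> Y (G - sh G) = 0 \<Longrightarrow> Y (G - [:coeff G 0:]) = 0"
proof (induction n arbitrary: G)
  case 0
  then have "[:coeff G 0:] = G" by (simp add: degree_0_id)
  then show ?case by simp
next
  case (Suc n)
  show ?case
  proof (cases "degree G \<le> n")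
    case True then show ?thesis using Suc by blast
  next
    case False
    then have dG: "degree G = Suc n" using Suc.prems by simp
    let ?D = "G - sh G"
    let ?a = "lead_coeff G"
    let ?M = "monom ?a (Suc n)"
    have di: "degree ?D = n" "lead_coeff ?D = of_nat (Suc n) * ?a"
      using diff_info[OF dG] by auto
    have "Y [:lead_coeff ?D:] = 0" by (rule L1[OF di(1) Suc.prems(2)])
    then have "Y (smult [:1 / of_nat (Suc n):] [:lead_coeff ?D:]) = 0" by (rule Y_smult0)
    moreover have "smult [:1 / of_nat (Suc n):] [:lead_coeff ?D:] = [:?a:]"
    proof -
      have "[:1 / of_nat (Suc n) :: complex:] * (of_nat (Suc n) * ?a) = ?a"
        by (simp add: of_nat_poly mult.assoc[symmetric] del: of_nat_Suc)
      then show ?thesis using di(2) by simp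
    qed
    ultimately have Ya: "Y [:?a:] = 0" by simp
    have YM: "Y ?M = 0" by (rule Y_monom0[OF Ya])
    have YsM: "Y (sh ?M) = 0" by (rule Y_sh0[OF YM])
    let ?G2 = "G - ?M"
    have dG2: "degree ?G2 \<le> n"
    proof (rule degree_le, intro allI impI)
      fix i assume "n < i"
      show "coeff ?G2 i = 0"
      proof (cases "i = Suc n")
        case True then show ?thesis using dG by simp
      next
        case False
        with \<open>n < i\<close> have "Suc n < i" by simp
        then have "coeff G i = 0" using dG by (intro coeff_eq_0) simp
        then show ?thesis using False by simp
      qed
    qed
    have e: "?G2 - sh ?G2 = ?D - ?M + sh ?M" by (simp only: pcompose_diff) (simp add: algebra_simps)
    have "Y (?G2 - sh ?G2) = Y ?D - Y ?M + Y (sh ?M)" by (simp only: e Y_add Y_diff)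
    then have "Y (?G2 - sh ?G2) = 0" using Suc.prems(2) YM YsM by simp
    then have "Y (?G2 - [:coeff ?G2 0:]) = 0" by (rule Suc.IH[OF dG2])
    moreover have "coeff ?G2 0 = coeff G 0" by simp
    ultimately have "Y (?G2 - [:coeff G 0:]) = 0" by simp
    moreover have "G - [:coeff G 0:] = (?G2 - [:coeff G 0:]) + ?M" by simp
    ultimately show ?thesis using YM by (simp only: Y_add) simp
  qed
qed

lemma whitt_central:
  assumes x: "A gE x = A (cst eta) x" and p: "fin p" "x = A p v"
  shows "\<exists>z. central f z \<and> x = A z v"
proof -
  obtain G where G: "x = Y G" using span[OF p(1)] p(2) by blast
  have "A (cst eta) (Y (sh G)) = A (cst eta) (Y G)" using x G Y_E[of G] by simp
  then have "A (cst (1 / eta)) (A (cst eta) (Y (sh G))) = A (cst (1 / eta)) (A (cst eta) (Y G))" by simp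
  then have "Y (sh G) = Y G" using eta0 by (simp add: A_cst_cancel)
  then have "Y (G - sh G) = 0" by (simp add: Y_diff)
  then have "Y (G - [:coeff G 0:]) = 0" by (rule L2[OF order.refl])
  then have "Y G = Y [:coeff G 0:]" by (simp add: Y_diff)
  then have "x = A (pev (coeff G 0) \<Omega>) v" using G by (simp add: Y_const)
  then show ?thesis using cpev by blast
qed

end

theorem mainTheorem5:
  fixes f :: "complex poly" and eta :: complex
    and act :: "fa \<Rightarrow> 'v::ab_group_add \<Rightarrow> 'v"
  assumes "eta \<noteq> 0"
    and "whittaker_module f act eta"
  shows "(\<forall>z\<in>R_center f. act z \<in> R_End act)
       \<and> (\<forall>z\<in>R_center f. \<forall>z'\<in>R_center f.
            act z = act z' \<longleftrightarrow> fa_sub z z' \<in> Z_ann f act)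
       \<and> (\<forall>\<phi>\<in>R_End act. \<exists>z\<in>R_center f. \<phi> = act z)
       \<and> (\<forall>\<phi>\<in>R_End act. \<forall>\<psi>\<in>R_End act. \<phi> \<circ> \<psi> = \<psi> \<circ> \<phi>)"
proof -
  have Rm: "R_module f act" and "\<exists>v. whittaker_vector act eta v \<and> (\<forall>x. \<exists>p\<in>FA. x = act p v)"
    using assms(2) by (auto simp: whittaker_module_def)
  then obtain v where wv: "whittaker_vector act eta v" and gen: "\<forall>x. \<exists>p\<in>FA. x = act p v" by blast
  interpret WM f act by unfold_locales (rule Rm)
  have actA: "act p = A (Abs_nc p)" for p by (simp add: A_def Abs_nc_inverse)
  have finA: "fin (Abs_nc p) \<longleftrightarrow> p \<in> FA" for p by (simp add: fin.rep_eq Abs_nc_inverse)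
  have wv': "A gE v = A (cst eta) v"
    using wv by (simp add: whittaker_vector_def A_def wd.rep_eq cst.rep_eq)
  interpret WV f act eta v by unfold_locales (rule wv', rule assms(1))
  have cen: "z \<in> R_center f \<longleftrightarrow> central f (Abs_nc z)" for z
    using R_center_iff[of "Abs_nc z" f] by (simp add: Abs_nc_inverse)
  have comm: "act z (act p x) = act p (act z x)" if "z \<in> R_center f" "p \<in> FA" for z p x
    using that by (simp add: actA cen finA A_central_comm)
  have P1: "\<forall>z\<in>R_center f. act z \<in> R_End act"
  proof
    fix z assume z: "z \<in> R_center f"
    then have "fin (Abs_nc z)" using cen by (simp add: central_def)
    then show "act z \<in> R_End act" using z comm by (simp add: R_End_def actA A_add_vec)
  qed
  have P2: "\<forall>z\<in>R_center f. \<forall>z'\<in>R_center f. act z = act z' \<longleftrightarrow> fa_sub z z' \<in> Z_ann f act"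
  proof (intro ballI)
    fix z z' assume z: "z \<in> R_center f" and z': "z' \<in> R_center f"
    then have cz: "central f (Abs_nc z)" and cz': "central f (Abs_nc z')" using cen by auto
    have eq: "fa_sub z z' = Rep_nc (Abs_nc z - Abs_nc z')" by (simp add: minus_nc.rep_eq Abs_nc_inverse)
    have c: "fa_sub z z' \<in> R_center f"
      using central_diff[OF cz cz'] R_center_iff eq by simp
    have "act (fa_sub z z') x = act z x - act z' x" for x
    proof -
      have "act (fa_sub z z') x = A (Abs_nc z - Abs_nc z') x" by (simp only: eq A_def)
      also have "\<dots> = A (Abs_nc z) x - A (Abs_nc z') x"
        using cz cz' by (simp add: A_diff central_def)
      finally show ?thesis by (simp add: actA)
    qed
    then show "act z = act z' \<longleftrightarrow> fa_sub z z' \<in> Z_ann f act"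
      using c by (auto simp: Z_ann_def fun_eq_iff)
  qed
  have P3: "\<forall>\<phi>\<in>R_End act. \<exists>z\<in>R_center f. \<phi> = act z"
  proof
    fix \<phi> assume ph: "\<phi> \<in> R_End act"
    then have phc: "\<phi> (act p y) = act p (\<phi> y)" if "p \<in> FA" for p y
      using that by (simp add: R_End_def)
    obtain p where p: "p \<in> FA" "\<phi> v = act p v" using gen by blast
    have "A gE (\<phi> v) = A (cst eta) (\<phi> v)"
    proof -
      have "A gE (\<phi> v) = \<phi> (A gE v)" using phc[of "Rep_nc gE" v] by (simp add: A_def fin.rep_eq[symmetric])
      also have "\<dots> = \<phi> (A (cst eta) v)" by (simp add: wv')
      also have "\<dots> = A (cst eta) (\<phi> v)" using phc[of "Rep_nc (cst eta)" v] by (simp add: A_def fin.rep_eq[symmetric])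
      finally show ?thesis .
    qed
    then obtain z where z: "central f z" "\<phi> v = A z v"
      using whitt_central[of "\<phi> v" "Abs_nc p"] p by (auto simp: actA finA)
    have "\<phi> = act (Rep_nc z)"
    proof
      fix y
      obtain q where q: "q \<in> FA" "y = act q v" using gen by blast
      have "\<phi> y = act q (\<phi> v)" using q phc by simp
      also have "\<dots> = A (Abs_nc q) (A z v)" using z by (simp add: actA)
      also have "\<dots> = A z (A (Abs_nc q) v)" using q z by (intro A_central_comm[symmetric]) (simp_all add: finA)
      also have "\<dots> = act (Rep_nc z) y" using q by (simp add: actA Rep_nc_inverse)
      finally show "\<phi> y = act (Rep_nc z) y" .
    qed
    moreover have "Rep_nc z \<in> R_center f" using z R_center_iff by blast
    ultimately show "\<exists>z\<in>R_center f. \<phi> = act z" by blast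
  qed
  have P4: "\<forall>\<phi>\<in>R_End act. \<forall>\<psi>\<in>R_End act. \<phi> \<circ> \<psi> = \<psi> \<circ> \<phi>"
  proof (intro ballI)
    fix \<phi> \<psi> assume "\<phi> \<in> R_End act" "\<psi> \<in> R_End act"
    then obtain z z' where z: "z \<in> R_center f" "\<phi> = act z" and z': "z' \<in> R_center f" "\<psi> = act z'"
      using P3 by blast
    have "z' \<in> FA" using z' by (simp add: R_center_def)
    then show "\<phi> \<circ> \<psi> = \<psi> \<circ> \<phi>" using z z' comm by (auto simp: fun_eq_iff)
  qed
  show ?thesis using P1 P2 P3 P4 by blast
qed

end
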